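(* Let $f:\mathbb{C}\to\mathbb{C}$ be a transcendental entire function, regarded as a continuous open-dense defined map $f:\mathbb{P}^1\dashrightarrow\mathbb{P}^1$ with domain $\mathbb{C}$, and let $\infty$ denote the point at infinity. Let $\mu_X$ be the positive strong submeasure $\mu_X(\varphi)=\max_{\mathbb{P}^1}\varphi$. Then $f_*(\delta_\infty)=\mu_X$ and $f_*(\mu_X)=\mu_X$. More generally, if $\mu=\mu_0+a\delta_\infty$ is a finite positive Borel measure on $\mathbb{P}^1$ with $\mu_0(\{\infty\})=0$ and $a\ge0$, then $f_*(\mu)(\varphi)=\int_{\mathbb{C}}\varphi\circ f\,d\mu_0+a\max_{\mathbb{P}^1}\varphi$ for all $\varphi\in C^0(\mathbb{P}^1)$, i.e. $f_*(\mu)=f_*(\mu_0)+a\mu_X$.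
   Context: For a continuous open-dense defined map $f$ (a continuous map defined on an open dense subset $U$ of a compact metric space $X$, here $U=\mathbb{C}\subset X=\mathbb{P}^1$) and $\varphi\in C^0(X)$, $f^*(\varphi)=E(\varphi\circ f)$, equal to $\varphi\circ f$ on $U$ and to $\limsup_{y\in U,y\to x}\varphi(f(y))$ for $x\notin U$. For a positive strong submeasure $\mu$ (sub-linear, bounded, non-decreasing map $C^0(X)\to\mathbb{R}$, e.g. a finite positive Borel measure), $f_*(\mu)(\varphi)=\inf\{\mu(\psi):\psi\in C^0(X),\psi\ge f^*(\varphi)\}$. *)

theory Defs
  imports "HOL-Probability.Probability"
begin

text \<open>The Riemann sphere P^1 is modelled as the unit sphere S2 in R^3,
  with the point at infinity the north pole; C is embedded by inverse
  stereographic projection sph, with inverse chart on S2 - {north}.\<close>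

type_synonym R3 = "real \<times> real \<times> real"

definition S2 :: "R3 set" where
  "S2 = sphere 0 1"

definition north :: R3 where
  "north = (0, 0, 1)"

definition sph :: "complex \<Rightarrow> R3" where
  "sph z = (2 * Re z / (1 + (cmod z)\<^sup>2), 2 * Im z / (1 + (cmod z)\<^sup>2),
            ((cmod z)\<^sup>2 - 1) / ((cmod z)\<^sup>2 + 1))"

definition chart :: "R3 \<Rightarrow> complex" where
  "chart p = Complex (fst p) (fst (snd p)) / complex_of_real (1 - snd (snd p))"

definition pullback :: "(complex \<Rightarrow> complex) \<Rightarrow> (R3 \<Rightarrow> real) \<Rightarrow> R3 \<Rightarrow> real" where
  "pullback f \<phi> x =
     (if x = north
      then real_of_ereal (Limsup (at north within (S2 - {north}))
                                 (\<lambda>y. ereal (\<phi> (sph (f (chart y))))))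
      else \<phi> (sph (f (chart x))))"

definition pushforward :: "((R3 \<Rightarrow> real) \<Rightarrow> real) \<Rightarrow> (complex \<Rightarrow> complex) \<Rightarrow> (R3 \<Rightarrow> real) \<Rightarrow> real" where
  "pushforward \<mu> f \<phi> =
     Inf {\<mu> \<psi> | \<psi>. continuous_on S2 \<psi> \<and> (\<forall>x\<in>S2. pullback f \<phi> x \<le> \<psi> x)}"

definition muX :: "(R3 \<Rightarrow> real) \<Rightarrow> real" where
  "muX \<phi> = Sup (\<phi> ` S2)"

definition borelS2 :: "R3 measure" where
  "borelS2 = restrict_space borel S2"

definition transcendental_entire :: "(complex \<Rightarrow> complex) \<Rightarrow> bool" where
  "transcendental_entire f \<longleftrightarrow> f holomorphic_on UNIV \<and> \<not> (\<exists>p. \<forall>z. f z = poly p z)"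

end

theory Submission
  imports Defs "HOL-Complex_Analysis.Complex_Analysis"
begin

lemma sum_is_poly: "\<exists>p. \<forall>z. (\<Sum>i\<le>n. a i * z^i) = poly p (z::complex)"
  by (rule exI[of _ "\<Sum>i\<le>n. monom (a i) i"]) (simp add: poly_sum poly_monom)

lemma CW_inf:
  assumes te: "transcendental_entire f" and U: "open U" "U \<noteq> {}" and R: "R > 0"
  obtains z where "cmod z > R" "f z \<in> U"
proof -
  have holf: "f holomorphic_on UNIV" using te by (simp add: transcendental_entire_def)
  have np: "\<not> (\<exists>p. \<forall>z. f z = poly p z)" using te by (simp add: transcendental_entire_def)
  define h where "h = f \<circ> inverse"
  have hol: "h holomorphic_on (ball 0 (inverse R) - {0})"
    unfolding h_def
    by (rule holomorphic_on_compose) (auto intro!: holomorphic_intros holomorphic_on_subset[OF holf])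
  have 1: "\<not> (h \<longlongrightarrow> l) (at 0)" for l
  proof
    assume "(h \<longlongrightarrow> l) (at 0)"
    then have "(f \<longlongrightarrow> l) at_infinity"
      by (simp add: at_to_infinity filterlim_filtermap h_def o_def)
    then have "\<forall>z. f z = l" using Liouville_weak[OF holf] by blast
    then have "\<forall>z. f z = poly [:l:] z" by simp
    with np show False by blast
  qed
  have 2: "\<not> ((inverse \<circ> h) \<longlongrightarrow> l) (at 0)" for l
  proof
    assume "((inverse \<circ> h) \<longlongrightarrow> l) (at 0)"
    then have "((inverse \<circ> f) \<longlongrightarrow> l) at_infinity"
      by (simp add: at_to_infinity filterlim_filtermap h_def o_def)
    then obtain a n where "\<And>z. f z = (\<Sum>i\<le>n. a i * z^i)"
      using pole_at_infinity[OF holf] by blast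
    with sum_is_poly[where n=n and a=a] np show False by metis
  qed
  have cl: "closure (h ` (ball 0 (inverse R) - {0})) = UNIV"
    by (rule Casorati_Weierstrass[OF _ _ hol 1 2]) (use R in auto)
  have "U \<inter> h ` (ball 0 (inverse R) - {0}) \<noteq> {}"
    using open_Int_closure_eq_empty[OF U(1), of "h ` (ball 0 (inverse R) - {0})"] cl U(2) by auto
  then obtain w where w: "w \<in> ball 0 (inverse R)" "w \<noteq> 0" "h w \<in> U" by blast
  have wp: "cmod w > 0" using w(2) by simp
  have "R * cmod w < 1" using w(1) R by (simp add: field_simps)
  then have "R < 1 / cmod w" using wp by (simp add: less_divide_eq)
  then have "cmod (inverse w) > R"
    by (simp add: norm_inverse divide_inverse)
  moreover have "f (inverse w) \<in> U" using w by (simp add: h_def)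
  ultimately show ?thesis using that by blast
qed

lemma north_S2: "north \<in> S2"
  by (simp add: S2_def north_def norm_Pair)

lemma norm3: "norm ((a,b,c)::R3) = sqrt (a^2+b^2+c^2)"
  by (simp add: norm_Pair)

lemma alg1: fixes a b r :: real assumes "r = a^2+b^2"
  shows "(2*a/(1+r))^2 + (2*b/(1+r))^2 + ((r-1)/(r+1))^2 = 1"
proof -
  have s: "1 + r > 0" using assms by (simp add: add_pos_nonneg)
  have "(2*a/(1+r))^2 + (2*b/(1+r))^2 + ((r-1)/(r+1))^2 = (4*(a^2+b^2) + (r-1)^2)/(1+r)^2"
    by (simp add: power_divide add_divide_distrib add.commute power_mult_distrib)
  also have "4*(a^2+b^2) + (r-1)^2 = (1+r)^2" unfolding assms[symmetric] by (simp add: power2_eq_square algebra_simps)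
  finally show ?thesis using s by simp
qed
lemma alg2: fixes a b r :: real assumes "r = a^2+b^2"
  shows "(2*a/(1+r))^2 + (2*b/(1+r))^2 + ((r-1)/(r+1) - 1)^2 = 4/(1+r)"
proof -
  have s: "1 + r > 0" using assms by (simp add: add_pos_nonneg)
  have e: "(r-1)/(r+1) - 1 = -2/(1+r)" using s by (simp add: field_simps)
  have "(2*a/(1+r))^2 + (2*b/(1+r))^2 + ((r-1)/(r+1) - 1)^2 = (4*(a^2+b^2) + 4)/(1+r)^2"
    unfolding e by (simp add: power_divide add_divide_distrib power_mult_distrib)
  also have "4*(a^2+b^2) + 4 = 4 * (1+r)" unfolding assms[symmetric] by simp
  also have "4 * (1+r) / (1+r)^2 = 4/(1+r)" using s by (simp add: power2_eq_square del: distrib_left_numeral distrib_right_numeral)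
  finally show ?thesis .
qed
lemma alg3: fixes p q t :: real assumes "p^2+q^2+t^2 = 1" "t \<noteq> 1"
  shows "(p^2+q^2)/(1-t)^2 = (1+t)/(1-t)"
proof -
  have "p^2+q^2 = (1-t)*(1+t)" using assms(1) by (simp add: algebra_simps power2_eq_square)
  then show ?thesis using assms(2) by (simp add: power2_eq_square)
qed
lemma alg4: fixes p t :: real assumes "t \<noteq> 1"
  shows "2 * (p/(1-t)) / (1 + (1+t)/(1-t)) = p" "((1+t)/(1-t) - 1) / ((1+t)/(1-t) + 1) = t"
proof -
  have d: "1 - t \<noteq> 0" using assms by simp
  have e: "1 + (1+t)/(1-t) = 2/(1-t)" "(1+t)/(1-t) + 1 = 2/(1-t)" "(1+t)/(1-t) - 1 = 2*t/(1-t)"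
    using d by (simp_all add: field_simps)
  show "2 * (p/(1-t)) / (1 + (1+t)/(1-t)) = p" unfolding e using d by simp
  show "((1+t)/(1-t) - 1) / ((1+t)/(1-t) + 1) = t" unfolding e using d by simp
qed

lemma r2: "(cmod z)^2 = (Re z)^2 + (Im z)^2" by (simp add: cmod_power2)

lemma sph_S2: "sph z \<in> S2"
  using alg1[OF r2[of z]] by (simp add: S2_def sph_def norm3)

lemma sph_third: "snd (snd (sph z)) < 1"
proof -
  have "(cmod z)^2 + 1 > 0" by (simp add: add_nonneg_pos)
  then show ?thesis by (simp add: sph_def)
qed

lemma sph_ne: "sph z \<noteq> north"
  using sph_third[of z] by (auto simp: north_def)

lemma chart_sph: "chart (sph z) = z"
proof -
  have p: "(cmod z)^2 + 1 > 0" by (simp add: add_nonneg_pos)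
  have e: "1 - ((cmod z)\<^sup>2 - 1) / ((cmod z)\<^sup>2 + 1) = 2 / (1 + (cmod z)\<^sup>2)"
    using p by (simp add: field_simps)
  have "2 * x / (1 + (cmod z)\<^sup>2) / (2 / (1 + (cmod z)\<^sup>2)) = x" for x
    using p by (simp add: add.commute)
  then show ?thesis
    unfolding chart_def sph_def
    by (simp add: e complex_eq_iff Re_divide_of_real Im_divide_of_real del: of_real_diff)
qed

lemma S2_comp: "p \<in> S2 \<Longrightarrow> (fst p)^2 + (fst (snd p))^2 + (snd (snd p))^2 = 1"
  by (cases p) (auto simp: S2_def norm3)

lemma sph_chart: assumes "y \<in> S2" "y \<noteq> north" shows "sph (chart y) = y"
proof -
  obtain p q t where y: "y = (p,q,t)" by (cases y) auto
  have e: "p^2+q^2+t^2 = 1" using S2_comp[OF assms(1)] y by simp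
  have "t \<noteq> 1"
  proof
    assume "t = 1"
    then have "p^2 + q^2 = 0" using e by simp
    then have "p = 0" "q = 0" by (auto simp: add_nonneg_eq_0_iff)
    with \<open>t = 1\<close> y assms(2) show False by (simp add: north_def)
  qed
  then have t1: "1 - t \<noteq> 0" by simp
  have c: "chart (p,q,t) = Complex (p/(1-t)) (q/(1-t))"
    using t1 by (simp add: chart_def complex_eq_iff Re_divide_of_real Im_divide_of_real)
  have n: "(cmod (chart (p,q,t)))^2 = (p^2+q^2)/(1-t)^2"
    by (simp add: c cmod_power2 power_divide add_divide_distrib)
  have n2: "(cmod (chart (p,q,t)))^2 = (1+t)/(1-t)"
    unfolding n by (rule alg3[OF e \<open>t \<noteq> 1\<close>])
  have "sph (chart (p,q,t)) = (p,q,t)"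
    unfolding sph_def n2 using alg4(1)[OF \<open>t \<noteq> 1\<close>, of p] alg4(1)[OF \<open>t \<noteq> 1\<close>, of q] alg4(2)[OF \<open>t \<noteq> 1\<close>]
    by (simp add: c)
  then show ?thesis using y by simp
qed

lemma dist_sph_north: "(dist (sph z) north)^2 = 4 / (1 + (cmod z)^2)"
  using alg2[OF r2[of z]] by (simp add: dist_norm sph_def north_def norm3)

lemma dist_sph_north_less: assumes d: "d > 0" and z: "cmod z > 2 / d" shows "dist (sph z) north < d"
proof -
  have "2/d > 0" using d by simp
  then have "(cmod z)^2 > (2/d)^2" using z by (simp add: power_strict_mono)
  then have h: "4 / d^2 < (cmod z)^2" by (simp add: power_divide)
  have d2: "d^2 > 0" using d by simp
  have "4 < (cmod z)^2 * d^2" using h d2 by (simp add: divide_less_eq)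
  also have "\<dots> \<le> (1 + (cmod z)^2) * d^2" using d2 by simp
  finally have "4 < (1 + (cmod z)^2) * d^2" .
  moreover have "1 + (cmod z)^2 > 0" by (simp add: add_pos_nonneg)
  ultimately have "4 / (1 + (cmod z)^2) < d^2" by (simp add: divide_less_eq mult.commute)
  then have "(dist (sph z) north)^2 < d^2" by (simp add: dist_sph_north)
  then show ?thesis using d by (simp add: power_less_imp_less_base)
qed

lemma cont_sph: "continuous_on UNIV sph"
proof -
  have a1: "1 + (cmod z)^2 \<noteq> 0" for z :: complex
    using zero_le_power2[of "cmod z"] by linarith
  have a2: "(cmod z)^2 + 1 \<noteq> 0" for z :: complex
    using zero_le_power2[of "cmod z"] by linarith
  note a = a1 a2
  show ?thesis unfolding sph_def by (intro continuous_intros) (simp_all add: a)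
qed

lemma cont_chart: "continuous_on (S2 - {north}) chart"
proof -
  have ne: "1 - snd (snd y) \<noteq> 0" if "y \<in> S2 - {north}" for y
    using sph_chart[of y] that sph_third[of "chart y"] by auto
  have "continuous_on (S2 - {north}) (\<lambda>p. (of_real (fst p) + \<i> * of_real (fst (snd p))) / complex_of_real (1 - snd (snd p)))"
    by (intro continuous_intros) (use ne in auto)
  then show ?thesis by (simp add: chart_def Complex_eq)
qed

lemma muX_facts:
  assumes "continuous_on S2 \<phi>"
  shows "\<forall>x\<in>S2. \<phi> x \<le> muX \<phi>" "\<exists>p\<in>S2. \<phi> p = muX \<phi>" "\<exists>B. \<forall>x\<in>S2. \<bar>\<phi> x\<bar> \<le> B"
proof -
  have c: "compact (\<phi> ` S2)" by (rule compact_continuous_image[OF assms]) (simp add: S2_def)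
  have ne: "\<phi> ` S2 \<noteq> {}" using north_S2 by auto
  obtain s where s: "s \<in> \<phi> ` S2" "\<forall>t\<in>\<phi> ` S2. t \<le> s" using compact_attains_sup[OF c ne] by blast
  have m: "muX \<phi> = s" unfolding muX_def by (rule cSup_eq_maximum) (use s in auto)
  show "\<forall>x\<in>S2. \<phi> x \<le> muX \<phi>" using s m by auto
  show "\<exists>p\<in>S2. \<phi> p = muX \<phi>" using s m by auto
  show "\<exists>B. \<forall>x\<in>S2. \<bar>\<phi> x\<bar> \<le> B"
    using compact_imp_bounded[OF c] by (auto simp: bounded_real)
qed

lemma pull_le: assumes c: "continuous_on S2 \<phi>" and te: "transcendental_entire f"
  shows "pullback f \<phi> north = muX \<phi>"
proof -
  define X where "X = (\<lambda>y. ereal (\<phi> (sph (f (chart y)))))"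
  define F where "F = at north within (S2 - {north})"
  have up: "Limsup F X \<le> ereal (muX \<phi>)"
    by (rule Limsup_bounded) (simp add: X_def muX_facts(1)[OF c] sph_S2)
  have freq: "\<not> eventually (\<lambda>y. \<phi> (sph (f (chart y))) \<le> r) F" if r: "r < muX \<phi>" for r
  proof
    assume "eventually (\<lambda>y. \<phi> (sph (f (chart y))) \<le> r) F"
    then obtain d where d: "d > 0" "\<forall>y\<in>S2-{north}. y \<noteq> north \<and> dist y north < d \<longrightarrow> \<phi> (sph (f (chart y))) \<le> r"
      unfolding F_def eventually_at by blast
    obtain p0 where p0: "p0 \<in> S2" "\<phi> p0 = muX \<phi>" using muX_facts(2)[OF c] by blast
    have "muX \<phi> - r > 0" using r by simp
    then obtain \<eta> where \<eta>: "\<eta> > 0" "\<forall>q\<in>S2. dist q p0 < \<eta> \<longrightarrow> dist (\<phi> q) (\<phi> p0) < muX \<phi> - r"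
      using c p0(1) unfolding continuous_on_iff by blast
    define U where "U = {w. dist (sph w) p0 < \<eta>}"
    have oU: "open U" unfolding U_def
      by (rule open_Collect_less[OF continuous_on_dist[OF cont_sph continuous_on_const] continuous_on_const])
    have neU: "U \<noteq> {}"
    proof (cases "p0 = north")
      case True
      have "cmod (complex_of_real (2/\<eta>+1)) > 2/\<eta>" unfolding norm_of_real using \<eta> by simp
      then have "dist (sph (of_real (2/\<eta> + 1))) north < \<eta>"
        by (rule dist_sph_north_less[OF \<eta>(1)])
      then show ?thesis using True U_def by auto
    next
      case False
      then have "sph (chart p0) = p0" using sph_chart p0 by auto
      then have "chart p0 \<in> U" using \<eta> by (simp add: U_def)
      then show ?thesis by auto
    qed
    have "2/d > 0" using d by simp
    then obtain z where z: "cmod z > 2/d" "f z \<in> U" using CW_inf[OF te oU neU] by metis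
    have "sph z \<in> S2 - {north}" using sph_S2 sph_ne by auto
    moreover have "dist (sph z) north < d" using dist_sph_north_less d z by auto
    ultimately have "\<phi> (sph (f (chart (sph z)))) \<le> r" using d(2) sph_ne by auto
    then have "\<phi> (sph (f z)) \<le> r" by (simp add: chart_sph)
    moreover have "dist (\<phi> (sph (f z))) (\<phi> p0) < muX \<phi> - r" using \<eta>(2) sph_S2 z(2) U_def by auto
    ultimately show False using p0(2) by (auto simp: dist_real_def)
  qed
  have low: "ereal (muX \<phi>) \<le> Limsup F X"
  proof (rule ccontr)
    assume "\<not> ereal (muX \<phi>) \<le> Limsup F X"
    then have "Limsup F X < ereal (muX \<phi>)" by simp
    then obtain r where r: "Limsup F X < ereal r" "ereal r < ereal (muX \<phi>)" using ereal_dense2 by blast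
    have "eventually (\<lambda>y. X y < ereal r) F" using Limsup_lessD[OF r(1)] .
    then have "eventually (\<lambda>y. \<phi> (sph (f (chart y))) \<le> r) F" by (rule eventually_mono) (simp add: X_def)
    with freq[of r] r(2) show False by simp
  qed
  have "Limsup F X = ereal (muX \<phi>)" using up low by simp
  then show ?thesis unfolding pullback_def F_def X_def by simp
qed

lemma pull_bound: assumes c: "continuous_on S2 \<phi>" and te: "transcendental_entire f" and x: "x \<in> S2"
  shows "pullback f \<phi> x \<le> muX \<phi>"
  using pull_le[OF c te] muX_facts(1)[OF c] sph_S2 by (cases "x = north") (auto simp: pullback_def)

lemma space_borelS2: "space borelS2 = S2" by (simp add: borelS2_def space_restrict_space)

lemma meas_S2: "continuous_on S2 \<psi> \<Longrightarrow> \<psi> \<in> borel_measurable borelS2"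
  unfolding borelS2_def by (rule borel_measurable_continuous_on_restrict)

lemma nn_sum:
  assumes sM: "sets M = sets borelS2" and sM0: "sets M0 = sets borelS2"
    and em: "\<forall>A\<in>sets M. emeasure M A = emeasure M0 A + ennreal a * indicator A north"
    and u: "u \<in> borel_measurable borelS2"
  shows "(\<integral>\<^sup>+x. u x \<partial>M) = (\<integral>\<^sup>+x. u x \<partial>M0) + ennreal a * u north"
  using u
proof (induct rule: borel_measurable_induct)
  case (cong f g)
  have sp: "space M = S2" "space M0 = S2"
    using sets_eq_imp_space_eq[OF sM] sets_eq_imp_space_eq[OF sM0] space_borelS2 by auto
  have "(\<integral>\<^sup>+x. f x \<partial>M) = (\<integral>\<^sup>+x. g x \<partial>M)" "(\<integral>\<^sup>+x. f x \<partial>M0) = (\<integral>\<^sup>+x. g x \<partial>M0)"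
    using cong(3) sp space_borelS2 by (auto intro!: nn_integral_cong)
  moreover have "f north = g north" using cong(3) north_S2 space_borelS2 by auto
  ultimately show ?case using cong(4) by simp
next
  case (set A)
  then show ?case using em sM sM0 by simp
next
  case (mult u c)
  have m: "u \<in> borel_measurable M" "u \<in> borel_measurable M0"
    using mult(2) measurable_cong_sets[OF sM refl] measurable_cong_sets[OF sM0 refl] by auto
  show ?case using mult(4) by (simp add: nn_integral_cmult[OF m(1)] nn_integral_cmult[OF m(2)] distrib_left mult_ac)
next
  case (add u v)
  have m: "u \<in> borel_measurable M" "u \<in> borel_measurable M0" "v \<in> borel_measurable M" "v \<in> borel_measurable M0"
    using add(1,4) measurable_cong_sets[OF sM refl] measurable_cong_sets[OF sM0 refl] by auto
  show ?case using add(3,7) by (simp add: nn_integral_add m add_ac distrib_left)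
next
  case (seq U)
  have m1: "U i \<in> borel_measurable M" for i
    by (subst measurable_cong_sets[OF sM refl]) (rule seq(1))
  have m2: "U i \<in> borel_measurable M0" for i
    by (subst measurable_cong_sets[OF sM0 refl]) (rule seq(1))
  note m = m1 m2
  have i1: "incseq (\<lambda>i. \<integral>\<^sup>+x. U i x \<partial>M0)"
    using seq(4) by (auto simp: incseq_def le_fun_def intro!: nn_integral_mono)
  have un: "U m north \<le> U n north" if "m \<le> n" for m n
    using le_funD[OF incseqD[OF seq(4) that]] .
  have i2: "incseq (\<lambda>i. ennreal a * U i north)"
    unfolding incseq_def using un by (auto intro!: mult_left_mono)
  have "(\<integral>\<^sup>+x. (SUP i. U i) x \<partial>M) = (SUP i. \<integral>\<^sup>+x. U i x \<partial>M)"
    unfolding SUP_apply by (rule nn_integral_monotone_convergence_SUP[OF seq(4) m1])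
  also have "\<dots> = (SUP i. (\<integral>\<^sup>+x. U i x \<partial>M0) + ennreal a * U i north)"
    using seq(3) by simp
  also have "\<dots> = (SUP i. \<integral>\<^sup>+x. U i x \<partial>M0) + (SUP i. ennreal a * U i north)"
    by (rule ennreal_SUP_add[OF i1 i2])
  also have "\<dots> = (\<integral>\<^sup>+x. (SUP i. U i) x \<partial>M0) + ennreal a * (SUP i. U i) north"
    by (simp only: SUP_apply nn_integral_monotone_convergence_SUP[OF seq(4) m2] SUP_mult_left_ennreal)
  finally show ?case .
qed

lemma e2r: assumes "a \<ge> 0" shows "enn2real (ennreal a * ennreal t) = a * max 0 t"
proof (cases "t \<ge> 0")
  case True
  then show ?thesis using assms by (simp add: ennreal_mult[symmetric])
next
  case False
  then have "ennreal t = 0" by (simp add: ennreal_eq_0_iff)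
  then show ?thesis using False by simp
qed

lemma int_sum:
  assumes fM: "finite_measure M" and fM0: "finite_measure M0"
    and sM: "sets M = sets borelS2" and sM0: "sets M0 = sets borelS2"
    and em: "\<forall>A\<in>sets M. emeasure M A = emeasure M0 A + ennreal a * indicator A north"
    and a: "a \<ge> 0" and mb: "\<psi> \<in> borel_measurable borelS2"
    and B: "\<forall>x\<in>S2. \<bar>\<psi> x\<bar> \<le> B"
  shows "integral\<^sup>L M \<psi> = integral\<^sup>L M0 \<psi> + a * \<psi> north"
proof -
  have sp: "space M = S2" "space M0 = S2"
    using sets_eq_imp_space_eq[OF sM] sets_eq_imp_space_eq[OF sM0] space_borelS2 by auto
  have mM: "\<psi> \<in> borel_measurable M" by (subst measurable_cong_sets[OF sM refl]) (rule mb)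
  have mM0: "\<psi> \<in> borel_measurable M0" by (subst measurable_cong_sets[OF sM0 refl]) (rule mb)
  have iM: "integrable M \<psi>"
    by (rule finite_measure.integrable_const_bound[OF fM, of \<psi> B]) (use B sp mM in auto)
  have iM0: "integrable M0 \<psi>"
    by (rule finite_measure.integrable_const_bound[OF fM0, of \<psi> B]) (use B sp mM0 in auto)
  have p: "(\<integral>\<^sup>+x. ennreal (\<psi> x) \<partial>M) = (\<integral>\<^sup>+x. ennreal (\<psi> x) \<partial>M0) + ennreal a * ennreal (\<psi> north)"
    by (rule nn_sum[OF sM sM0 em]) (use mb in simp)
  have n: "(\<integral>\<^sup>+x. ennreal (- \<psi> x) \<partial>M) = (\<integral>\<^sup>+x. ennreal (- \<psi> x) \<partial>M0) + ennreal a * ennreal (- \<psi> north)"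
    by (rule nn_sum[OF sM sM0 em]) (use mb in simp)
  have f1: "(\<integral>\<^sup>+x. ennreal (\<psi> x) \<partial>M0) < top" "(\<integral>\<^sup>+x. ennreal (- \<psi> x) \<partial>M0) < top"
    using integrableD(2,3)[OF iM0] by (simp_all add: top.not_eq_extremum)
  have f2: "ennreal a * ennreal t < top" for t by (simp add: ennreal_mult_less_top)
  have "integral\<^sup>L M \<psi> = enn2real (\<integral>\<^sup>+x. ennreal (\<psi> x) \<partial>M) - enn2real (\<integral>\<^sup>+x. ennreal (- \<psi> x) \<partial>M)"
    by (rule real_lebesgue_integral_def[OF iM])
  also have "\<dots> = (enn2real (\<integral>\<^sup>+x. ennreal (\<psi> x) \<partial>M0) - enn2real (\<integral>\<^sup>+x. ennreal (- \<psi> x) \<partial>M0))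
       + (a * max 0 (\<psi> north) - a * max 0 (- \<psi> north))"
    unfolding p n by (simp add: enn2real_plus f1 f2 e2r[OF a])
  also have "\<dots> = integral\<^sup>L M0 \<psi> + a * \<psi> north"
    by (simp add: real_lebesgue_integral_def[OF iM0, symmetric]) (cases "\<psi> north \<ge> 0"; simp)
  finally show ?thesis .
qed

lemma conv_bound: fixes t u v B :: real
  assumes "0 \<le> t" "t \<le> 1" "\<bar>u\<bar> \<le> B" "\<bar>v\<bar> \<le> B"
  shows "\<bar>(1 - t) * u + t * v\<bar> \<le> B"
proof -
  have "\<bar>(1 - t) * u + t * v\<bar> \<le> \<bar>(1 - t) * u\<bar> + \<bar>t * v\<bar>" by (rule abs_triangle_ineq)
  also have "\<dots> = (1 - t) * \<bar>u\<bar> + t * \<bar>v\<bar>" using assms by (simp add: abs_mult)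
  also have "\<dots> \<le> (1 - t) * B + t * B" using assms by (intro add_mono mult_left_mono) auto
  also have "\<dots> = B" by (simp add: algebra_simps)
  finally show ?thesis .
qed

lemma push_main:
  assumes te: "transcendental_entire f" and c: "continuous_on S2 \<phi>"
    and fM: "finite_measure M" and fM0: "finite_measure M0"
    and sM: "sets M = sets borelS2" and sM0: "sets M0 = sets borelS2"
    and em: "\<forall>A\<in>sets M. emeasure M A = emeasure M0 A + ennreal a * indicator A north"
    and a: "a \<ge> 0"
  shows "pullback f \<phi> \<in> borel_measurable M0"
    and "pushforward (\<lambda>\<psi>. integral\<^sup>L M \<psi>) f \<phi> = integral\<^sup>L M0 (pullback f \<phi>) + a * muX \<phi>"
proof -
  define G where "G = pullback f \<phi>"
  define g where "g = (\<lambda>x. \<phi> (sph (f (chart x))))"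
  define m where "m = muX \<phi>"
  have sp: "space M = S2" "space M0 = S2"
    using sets_eq_imp_space_eq[OF sM] sets_eq_imp_space_eq[OF sM0] space_borelS2 by auto
  have Gn: "G north = m" using pull_le[OF c te] by (simp add: G_def m_def)
  have Gg: "G x = g x" if "x \<noteq> north" for x using that by (simp add: G_def g_def pullback_def)
  have Gle: "G x \<le> m" if "x \<in> S2" for x using pull_bound[OF c te that] by (simp add: G_def m_def)
  have holf: "f holomorphic_on UNIV" using te by (simp add: transcendental_entire_def)
  have cf: "continuous_on UNIV f" by (rule holomorphic_on_imp_continuous_on[OF holf])
  have cg: "continuous_on (S2 - {north}) g"
    unfolding g_def
    by (rule continuous_on_compose2[OF c continuous_on_compose2[OF cont_sph continuous_on_compose2[OF cf cont_chart]]])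
       (auto simp: sph_S2)
  obtain B where B: "\<forall>x\<in>S2. \<bar>\<phi> x\<bar> \<le> B" using muX_facts(3)[OF c] by blast
  obtain p0 where p0: "p0 \<in> S2" "\<phi> p0 = m" using muX_facts(2)[OF c] m_def by metis
  have mB: "\<bar>m\<bar> \<le> B" using B p0 by auto
  have GB: "\<bar>G x\<bar> \<le> B" if "x \<in> S2" for x
  proof (cases "x = north")
    case True then show ?thesis using Gn mB by simp
  next
    case False then show ?thesis using Gg B sph_S2 by (simp add: g_def)
  qed
  define t where "t n x = max 0 (min 1 (2 - (real n + 1) * dist x north))" for n :: nat and x :: R3
  define \<psi> where "\<psi> n x = (1 - t n x) * G x + t n x * m" for n x
  have t01: "0 \<le> t n x" "t n x \<le> 1" for n x by (simp_all add: t_def)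
  have tn: "t n north = 1" for n by (simp add: t_def)
  have \<psi>n: "\<psi> n north = m" for n by (simp add: \<psi>_def tn)
  have \<psi>G: "G x \<le> \<psi> n x" if "x \<in> S2" for n x
  proof -
    have "0 \<le> t n x * (m - G x)" using t01[of n x] Gle[OF that] by simp
    then show ?thesis by (simp add: \<psi>_def algebra_simps)
  qed
  have \<psi>B: "\<bar>\<psi> n x\<bar> \<le> B" if "x \<in> S2" for n x
    unfolding \<psi>_def by (rule conv_bound[OF t01 GB[OF that] mB])
  have ct: "continuous_on UNIV (t n)" for n
    unfolding t_def by (intro continuous_intros)
  have c\<psi>: "continuous_on S2 (\<psi> n)" for n
  proof -
    define r where "r = 1 / (real n + 1)"
    have r: "r > 0" by (simp add: r_def)
    define A where "A = S2 \<inter> {x. r \<le> dist x north}"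
    define C where "C = S2 \<inter> cball north r"
    have cS2: "closed S2" by (simp add: S2_def)
    have cA: "closed A" unfolding A_def
      by (intro closed_Int cS2 closed_Collect_le continuous_intros)
    have cC: "closed C" unfolding C_def by (intro closed_Int cS2 closed_cball)
    have "continuous_on A (\<lambda>x. (1 - t n x) * g x + t n x * m)"
      by (intro continuous_intros continuous_on_subset[OF ct] continuous_on_subset[OF cg])
         (use r in \<open>auto simp: A_def\<close>)
    moreover have "(1 - t n x) * g x + t n x * m = \<psi> n x" if "x \<in> A" for x
    proof -
      have "x \<noteq> north" using that r by (auto simp: A_def)
      then show ?thesis by (simp add: \<psi>_def Gg)
    qed
    ultimately have 1: "continuous_on A (\<psi> n)"
      using continuous_on_cong[of A A "\<lambda>x. (1 - t n x) * g x + t n x * m" "\<psi> n"] by auto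
    have t1: "t n x = 1" if "x \<in> C" for x
    proof -
      have "dist x north \<le> r" using that by (simp add: C_def dist_commute)
      then have "(real n + 1) * dist x north \<le> 1" by (simp add: r_def field_simps)
      then show ?thesis by (simp add: t_def)
    qed
    have 2: "continuous_on C (\<psi> n)"
      by (rule continuous_on_cong[THEN iffD1, OF refl _ continuous_on_const[of C m]]) (simp add: \<psi>_def t1)
    have "A \<union> C = S2" by (auto simp: A_def C_def dist_commute)
    then show ?thesis using continuous_on_closed_Un[OF cA cC 1 2] by simp
  qed
  have lim: "(\<lambda>n. \<psi> n x) \<longlonglongrightarrow> G x" if "x \<in> S2" for x
  proof (cases "x = north")
    case True then show ?thesis by (simp add: \<psi>n Gn)
  next
    case False
    then have d: "dist x north > 0" by simp
    obtain N :: nat where N: "2 / dist x north \<le> real N" using real_arch_simple by blast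
    have "\<psi> n x = G x" if "n \<ge> N" for n
    proof -
      have "2 / dist x north \<le> real n + 1" using N that by linarith
      then have "2 \<le> (real n + 1) * dist x north" using d by (simp add: divide_le_eq)
      then have "t n x = 0" by (simp add: t_def)
      then show ?thesis by (simp add: \<psi>_def)
    qed
    then have "eventually (\<lambda>n. \<psi> n x = G x) sequentially" unfolding eventually_sequentially by blast
    then show ?thesis by (rule tendsto_eventually)
  qed
  have m\<psi>: "\<psi> n \<in> borel_measurable borelS2" for n by (rule meas_S2[OF c\<psi>])
  have m\<psi>0: "\<psi> n \<in> borel_measurable M0" for n by (subst measurable_cong_sets[OF sM0 refl]) (rule m\<psi>)
  have mG: "G \<in> borel_measurable M0"
    by (rule borel_measurable_LIMSEQ_real[OF _ m\<psi>0]) (use lim sp in auto)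
  have iw: "integrable M0 (\<lambda>_. B)" using fM0 by (simp add: finite_measure.integrable_const)
  have bnd: "AE x in M0. norm (\<psi> n x) \<le> B" for n using \<psi>B sp by (auto intro!: AE_I2)
  have iG: "integrable M0 G"
    by (rule integrable_dominated_convergence[OF mG m\<psi>0 iw _ bnd]) (use lim sp in \<open>auto intro!: AE_I2\<close>)
  have i\<psi>: "integrable M0 (\<psi> n)" for n
    by (rule integrable_dominated_convergence2[OF mG m\<psi>0 iw _ bnd]) (use lim sp in \<open>auto intro!: AE_I2\<close>)
  have conv: "(\<lambda>n. integral\<^sup>L M0 (\<psi> n)) \<longlonglongrightarrow> integral\<^sup>L M0 G"
    by (rule integral_dominated_convergence[OF mG m\<psi>0 iw _ bnd]) (use lim sp in \<open>auto intro!: AE_I2\<close>)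
  have isum: "integral\<^sup>L M \<psi>' = integral\<^sup>L M0 \<psi>' + a * \<psi>' north" if c': "continuous_on S2 \<psi>'" for \<psi>'
  proof -
    obtain B' where "\<forall>x\<in>S2. \<bar>\<psi>' x\<bar> \<le> B'" using muX_facts(3)[OF c'] by blast
    then show ?thesis by (rule int_sum[OF fM fM0 sM sM0 em a meas_S2[OF c']])
  qed
  define S where "S = {integral\<^sup>L M \<psi>' | \<psi>'. continuous_on S2 \<psi>' \<and> (\<forall>x\<in>S2. pullback f \<phi> x \<le> \<psi>' x)}"
  have pS: "pushforward (\<lambda>\<psi>. integral\<^sup>L M \<psi>) f \<phi> = Inf S" by (simp add: pushforward_def S_def)
  have inS: "integral\<^sup>L M (\<psi> n) \<in> S" for n
    unfolding S_def using c\<psi>[of n] \<psi>G by (auto simp: G_def)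
  have lowS: "integral\<^sup>L M0 G + a * m \<le> s" if sS: "s \<in> S" for s
  proof -
    obtain \<psi>' where \<psi>': "s = integral\<^sup>L M \<psi>'" "continuous_on S2 \<psi>'" "\<forall>x\<in>S2. G x \<le> \<psi>' x"
      using sS unfolding S_def G_def by auto
    obtain B' where B': "\<forall>x\<in>S2. \<bar>\<psi>' x\<bar> \<le> B'" using muX_facts(3)[OF \<psi>'(2)] by blast
    have m': "\<psi>' \<in> borel_measurable M0" by (subst measurable_cong_sets[OF sM0 refl]) (rule meas_S2[OF \<psi>'(2)])
    have i': "integrable M0 \<psi>'"
      by (rule finite_measure.integrable_const_bound[OF fM0, of \<psi>' B']) (use B' sp m' in auto)
    have "integral\<^sup>L M0 G \<le> integral\<^sup>L M0 \<psi>'"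
      by (rule integral_mono[OF iG i']) (use \<psi>'(3) sp in auto)
    moreover have "m \<le> \<psi>' north" using \<psi>'(3) north_S2 Gn by force
    ultimately have "integral\<^sup>L M0 G + a * m \<le> integral\<^sup>L M0 \<psi>' + a * \<psi>' north"
      using a by (intro add_mono mult_left_mono) auto
    then show ?thesis using isum[OF \<psi>'(2)] \<psi>'(1) by simp
  qed
  have bS: "bdd_below S" using lowS by (auto simp: bdd_below_def)
  have up: "Inf S \<le> integral\<^sup>L M0 G + a * m"
  proof (rule LIMSEQ_le_const)
    show "(\<lambda>n. integral\<^sup>L M0 (\<psi> n) + a * m) \<longlonglongrightarrow> integral\<^sup>L M0 G + a * m"
      by (intro tendsto_intros conv)
    show "\<exists>N. \<forall>n\<ge>N. Inf S \<le> integral\<^sup>L M0 (\<psi> n) + a * m"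
      using cInf_lower[OF inS bS] isum[OF c\<psi>] \<psi>n by auto
  qed
  have low: "integral\<^sup>L M0 G + a * m \<le> Inf S"
    by (rule cInf_greatest) (use inS lowS in auto)
  show "pullback f \<phi> \<in> borel_measurable M0" using mG by (simp add: G_def)
  show "pushforward (\<lambda>\<psi>. integral\<^sup>L M \<psi>) f \<phi> = integral\<^sup>L M0 (pullback f \<phi>) + a * muX \<phi>"
    using pS up low by (simp add: G_def m_def)
qed

lemma set_int_eq:
  assumes sM0: "sets M0 = sets borelS2" and z: "emeasure M0 {north} = 0"
    and mG: "pullback f \<phi> \<in> borel_measurable M0"
  shows "integral\<^sup>L M0 (pullback f \<phi>) = (\<integral>x \<in> S2 - {north}. \<phi> (sph (f (chart x))) \<partial>M0)"
proof -
  have sp: "space M0 = S2" using sets_eq_imp_space_eq[OF sM0] space_borelS2 by auto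
  have nS: "{north} \<in> sets M0"
    unfolding sM0 borelS2_def sets_restrict_space using north_S2 by (auto intro!: image_eqI[of _ _ "{north}"])
  have DS: "S2 - {north} \<in> sets M0" using sets.Diff[OF sets.top nS] sp by simp
  have eq: "indicator (S2 - {north}) x *\<^sub>R \<phi> (sph (f (chart x))) = indicator (S2 - {north}) x *\<^sub>R pullback f \<phi> x" for x
    by (cases "x \<in> S2 - {north}") (auto simp: pullback_def)
  have ae: "AE x in M0. indicator (S2 - {north}) x *\<^sub>R pullback f \<phi> x = pullback f \<phi> x"
  proof (rule AE_I'[of "{north}"])
    show "{north} \<in> null_sets M0" using nS z by auto
  qed (auto simp: sp split: split_indicator)
  have "(\<integral>x \<in> S2 - {north}. \<phi> (sph (f (chart x))) \<partial>M0)
      = (\<integral>x. indicator (S2 - {north}) x *\<^sub>R pullback f \<phi> x \<partial>M0)"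
    unfolding set_lebesgue_integral_def eq ..
  also have "\<dots> = integral\<^sup>L M0 (pullback f \<phi>)"
    by (rule integral_cong_AE) (use ae mG DS in auto)
  finally show ?thesis ..
qed

theorem mainTheorem17:
  fixes f :: "complex \<Rightarrow> complex"
  assumes "transcendental_entire f"
  shows "(\<forall>\<phi>. continuous_on S2 \<phi> \<longrightarrow>
            pushforward (\<lambda>\<psi>. integral\<^sup>L (return borelS2 north) \<psi>) f \<phi> = muX \<phi>)
       \<and> (\<forall>\<phi>. continuous_on S2 \<phi> \<longrightarrow> pushforward muX f \<phi> = muX \<phi>)
       \<and> (\<forall>M M0 a \<phi>. finite_measure M \<and> sets M = sets borelS2
            \<and> finite_measure M0 \<and> sets M0 = sets borelS2
            \<and> emeasure M0 {north} = 0 \<and> a \<ge> 0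
            \<and> (\<forall>A \<in> sets M. emeasure M A = emeasure M0 A + ennreal a * indicator A north)
            \<and> continuous_on S2 \<phi> \<longrightarrow>
              pushforward (\<lambda>\<psi>. integral\<^sup>L M \<psi>) f \<phi>
                = (\<integral>x \<in> S2 - {north}. \<phi> (sph (f (chart x))) \<partial>M0) + a * muX \<phi>
            \<and> pushforward (\<lambda>\<psi>. integral\<^sup>L M \<psi>) f \<phi>
                = pushforward (\<lambda>\<psi>. integral\<^sup>L M0 \<psi>) f \<phi> + a * muX \<phi>)"
proof (intro conjI allI impI)
  note te = assms
  have nsp: "north \<in> space borelS2" using north_S2 space_borelS2 by simp
  have cconst: "continuous_on S2 (\<lambda>_. c)" for c :: real by simp
  have pb: "\<forall>x\<in>S2. pullback f \<phi> x \<le> muX \<phi>" if c: "continuous_on S2 \<phi>" for \<phi>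
    using pull_bound[OF c te] by blast
  {
    fix \<phi> :: "R3 \<Rightarrow> real" assume c: "continuous_on S2 \<phi>"
    let ?S = "{integral\<^sup>L (return borelS2 north) \<psi> | \<psi>. continuous_on S2 \<psi> \<and> (\<forall>x\<in>S2. pullback f \<phi> x \<le> \<psi> x)}"
    have "Inf ?S = muX \<phi>"
    proof (rule cInf_eq_minimum)
      have "integral\<^sup>L (return borelS2 north) (\<lambda>_. muX \<phi>) = muX \<phi>"
        by (rule integral_return[OF nsp]) simp
      then have "muX \<phi> = integral\<^sup>L (return borelS2 north) (\<lambda>_. muX \<phi>) \<and> continuous_on S2 (\<lambda>_. muX \<phi>) \<and> (\<forall>x\<in>S2. pullback f \<phi> x \<le> muX \<phi>)"
        using pb[OF c] by simp
      then show "muX \<phi> \<in> ?S" by blast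
    next
      fix s assume "s \<in> ?S"
      then obtain \<psi> where \<psi>: "s = integral\<^sup>L (return borelS2 north) \<psi>" "continuous_on S2 \<psi>" "\<forall>x\<in>S2. pullback f \<phi> x \<le> \<psi> x"
        by blast
      have "s = \<psi> north" using \<psi>(1) integral_return[OF nsp meas_S2[OF \<psi>(2)]] by simp
      then show "muX \<phi> \<le> s" using \<psi>(3) north_S2 pull_le[OF c te] by force
    qed
    then show "pushforward (\<lambda>\<psi>. integral\<^sup>L (return borelS2 north) \<psi>) f \<phi> = muX \<phi>"
      by (simp add: pushforward_def)
  next
    fix \<phi> :: "R3 \<Rightarrow> real" assume c: "continuous_on S2 \<phi>"
    let ?S = "{muX \<psi> | \<psi>. continuous_on S2 \<psi> \<and> (\<forall>x\<in>S2. pullback f \<phi> x \<le> \<psi> x)}"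
    have "Inf ?S = muX \<phi>"
    proof (rule cInf_eq_minimum)
      have "(\<lambda>_. muX \<phi>) ` S2 = {muX \<phi>}" using north_S2 by auto
      then have "muX (\<lambda>_. muX \<phi>) = muX \<phi>"
        unfolding muX_def[of "\<lambda>_. muX \<phi>"] by simp
      then have "muX \<phi> = muX (\<lambda>_. muX \<phi>) \<and> continuous_on S2 (\<lambda>_. muX \<phi>) \<and> (\<forall>x\<in>S2. pullback f \<phi> x \<le> muX \<phi>)"
        using pb[OF c] by simp
      then show "muX \<phi> \<in> ?S" by blast
    next
      fix s assume "s \<in> ?S"
      then obtain \<psi> where \<psi>: "s = muX \<psi>" "continuous_on S2 \<psi>" "\<forall>x\<in>S2. pullback f \<phi> x \<le> \<psi> x"
        by blast
      have "\<psi> north \<le> s" using \<psi>(1) muX_facts(1)[OF \<psi>(2)] north_S2 by simp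
      then show "muX \<phi> \<le> s" using \<psi>(3) north_S2 pull_le[OF c te] by force
    qed
    then show "pushforward muX f \<phi> = muX \<phi>"
      by (simp add: pushforward_def)
  }
next
  fix M M0 :: "R3 measure" and a :: real and \<phi> :: "R3 \<Rightarrow> real"
  assume h: "finite_measure M \<and> sets M = sets borelS2
            \<and> finite_measure M0 \<and> sets M0 = sets borelS2
            \<and> emeasure M0 {north} = 0 \<and> a \<ge> 0
            \<and> (\<forall>A \<in> sets M. emeasure M A = emeasure M0 A + ennreal a * indicator A north)
            \<and> continuous_on S2 \<phi>"
  then have fM: "finite_measure M" and sM: "sets M = sets borelS2" and fM0: "finite_measure M0"
    and sM0: "sets M0 = sets borelS2" and z: "emeasure M0 {north} = 0" and a: "a \<ge> 0"
    and em: "\<forall>A \<in> sets M. emeasure M A = emeasure M0 A + ennreal a * indicator A north"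
    and c: "continuous_on S2 \<phi>" by auto
  have em0: "\<forall>A \<in> sets M0. emeasure M0 A = emeasure M0 A + ennreal 0 * indicator A north" by simp
  note P = push_main[OF assms c fM fM0 sM sM0 em a]
  note P0 = push_main(2)[OF assms c fM0 fM0 sM0 sM0 em0 order.refl]
  show "pushforward (\<lambda>\<psi>. integral\<^sup>L M \<psi>) f \<phi>
                = (\<integral>x \<in> S2 - {north}. \<phi> (sph (f (chart x))) \<partial>M0) + a * muX \<phi>"
    using P(2) set_int_eq[OF sM0 z P(1)] by simp
  show "pushforward (\<lambda>\<psi>. integral\<^sup>L M \<psi>) f \<phi>
                = pushforward (\<lambda>\<psi>. integral\<^sup>L M0 \<psi>) f \<phi> + a * muX \<phi>"
    using P(2) P0 by simp
qed

end
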